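(* Let $A$ be an MV-algebra, $d$ a $(\odot,\vee)$-derivation on $A$ and $a\in A$. If $d(a)\in\mathbf{B}(A)$, then $d(d(a))=d(a)$.
   Context: An MV-algebra is an algebra $(A,\oplus,{}^*,0)$ of type $(2,1,0)$ satisfying: $x\oplus(y\oplus z)=(x\oplus y)\oplus z$, $x\oplus y=y\oplus x$, $x\oplus 0=x$, $x^{**}=x$, $x\oplus 0^*=0^*$, $(x^*\oplus y)^*\oplus y=(y^*\oplus x)^*\oplus x$. Put $1=0^*$ and $x\odot y=(x^*\oplus y^* )^*$. The natural order is $x\le y$ iff $x^*\oplus y=1$, with lattice operations $x\vee y=(x\odot y^* )\oplus y$, $x\wedge y=x\odot(x^*\oplus y)$. The Boolean center is $\mathbf{B}(A)=\{x\in A: x\oplus x=x\}$. A $(\odot,\vee)$-derivation on $A$ is a map $d:A\to A$ with $d(x\odot y)=(d(x)\odot y)\vee(x\odot d(y))$ for all $x,y\in A$. *)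

theory Defs
  imports Main
begin

text \<open>MV-algebra (A, oplus, star, 0), with A the whole type 'a.\<close>
locale mv_algebra =
  fixes oplus :: "'a \<Rightarrow> 'a \<Rightarrow> 'a" (infixl "\<oplus>" 65)
    and neg :: "'a \<Rightarrow> 'a"
    and zero :: "'a"
  assumes assoc: "x \<oplus> (y \<oplus> z) = (x \<oplus> y) \<oplus> z"
    and comm: "x \<oplus> y = y \<oplus> x"
    and zero_right: "x \<oplus> zero = x"
    and neg_neg: "neg (neg x) = x"
    and absorb: "x \<oplus> neg zero = neg zero"
    and luk: "neg (neg x \<oplus> y) \<oplus> y = neg (neg y \<oplus> x) \<oplus> x"
begin

definition one :: 'a where "one = neg zero"
definition odot :: "'a \<Rightarrow> 'a \<Rightarrow> 'a" (infixl "\<odot>" 70)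
  where "x \<odot> y = neg (neg x \<oplus> neg y)"
definition le :: "'a \<Rightarrow> 'a \<Rightarrow> bool" where "le x y \<longleftrightarrow> neg x \<oplus> y = one"
definition join :: "'a \<Rightarrow> 'a \<Rightarrow> 'a" where "join x y = (x \<odot> neg y) \<oplus> y"
definition meet :: "'a \<Rightarrow> 'a \<Rightarrow> 'a" where "meet x y = x \<odot> (neg x \<oplus> y)"
definition boolean_center :: "'a set" where "boolean_center = {x. x \<oplus> x = x}"
definition odot_join_derivation :: "('a \<Rightarrow> 'a) \<Rightarrow> bool" where
  "odot_join_derivation d \<longleftrightarrow> (\<forall>x y. d (x \<odot> y) = join (d x \<odot> y) (x \<odot> d y))"

end

end

theory Submission
  imports Defs
begin

context mv_algebra
begin

lemma zero_left: "zero \<oplus> x = x" using comm zero_right by metis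
lemma one_right: "x \<oplus> one = one" unfolding one_def by (rule absorb)
lemma one_left: "one \<oplus> x = one" using comm one_right by metis
lemma neg_one: "neg one = zero" unfolding one_def by (rule neg_neg)
lemma compl: "neg x \<oplus> x = one"
proof -
  have "neg (neg x \<oplus> one) \<oplus> one = neg (neg one \<oplus> x) \<oplus> x" by (rule luk)
  thus ?thesis by (simp add: one_right neg_one zero_left neg_neg)
qed
lemma compl2: "x \<oplus> neg x = one" using compl comm by metis

lemma odot_zero: "x \<odot> zero = zero"
  unfolding odot_def by (metis neg_one one_def one_right)
lemma zero_odot: "zero \<odot> x = zero"
  unfolding odot_def by (metis comm neg_one one_def one_right)
lemma odot_neg: "x \<odot> neg x = zero"
  unfolding odot_def by (simp add: neg_neg compl neg_one)
lemma join_zero: "join zero zero = zero"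
  unfolding join_def by (simp add: zero_odot zero_right)

lemma pos: "x \<oplus> y = zero \<Longrightarrow> x = zero"
proof -
  assume h: "x \<oplus> y = zero"
  have "neg x \<oplus> (x \<oplus> y) = neg x" by (simp add: h zero_right)
  hence "one \<oplus> y = neg x" by (simp add: assoc compl)
  hence "neg x = one" by (simp add: one_left)
  thus ?thesis by (metis neg_neg one_def)
qed

lemma odot_one: "x \<odot> one = x"
  unfolding odot_def one_def by (simp add: neg_neg zero_right)

lemma join_zeroD: "join u v = zero \<Longrightarrow> u = zero"
proof -
  assume h: "join u v = zero"
  hence h2: "v \<oplus> (u \<odot> neg v) = zero" unfolding join_def by (simp add: comm)
  hence "v = zero" by (rule pos)
  moreover from h have "u \<odot> neg v = zero" unfolding join_def by (rule pos)
  ultimately show ?thesis using odot_one[of u] by (simp add: one_def)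
qed

lemma antisym: "x \<odot> neg y = zero \<Longrightarrow> y \<odot> neg x = zero \<Longrightarrow> x = y"
proof -
  assume a1: "x \<odot> neg y = zero" and a2: "y \<odot> neg x = zero"
  have e1: "neg (neg x \<oplus> y) = zero" using a1 unfolding odot_def by (simp add: neg_neg)
  have e2: "neg (neg y \<oplus> x) = zero" using a2 unfolding odot_def by (simp add: neg_neg)
  have "neg (neg x \<oplus> y) \<oplus> y = neg (neg y \<oplus> x) \<oplus> x" by (rule luk)
  thus ?thesis by (simp add: e1 e2 zero_left)
qed

lemma le_join: "u \<odot> neg (join u v) = zero"
proof -
  have "join u v = neg (neg v \<oplus> u) \<oplus> u"
    unfolding join_def odot_def using luk by (simp add: neg_neg)
  hence "neg u \<oplus> join u v = (neg u \<oplus> u) \<oplus> neg (neg v \<oplus> u)"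
    by (metis assoc comm)
  thus ?thesis unfolding odot_def
    by (simp add: neg_neg compl one_left neg_one)
qed

lemma odot_le: "(x \<odot> y) \<odot> neg y = zero"
  unfolding odot_def by (simp add: neg_neg assoc[symmetric] compl one_right neg_one)

lemma bool_sq: "b \<oplus> b = b \<Longrightarrow> b \<odot> b = b"
proof (rule antisym)
  show "b \<odot> b \<odot> neg b = zero" by (rule odot_le)
  assume bb: "b \<oplus> b = b"
  have "neg (neg b \<oplus> neg b) \<oplus> neg b = neg (neg (neg b) \<oplus> b) \<oplus> b" by (rule luk)
  hence "(b \<odot> b) \<oplus> neg b = one" unfolding odot_def by (simp add: neg_neg bb compl)
  thus "b \<odot> neg (b \<odot> b) = zero" unfolding odot_def
    by (simp add: neg_neg comm neg_one)
qed

lemma bool_meet: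
  assumes bb: "b \<oplus> b = b" and ba: "b \<odot> neg a = zero"
  shows "a \<odot> b = b"
proof (rule antisym)
  show "a \<odot> b \<odot> neg b = zero" by (rule odot_le)
  define u where "u = neg b"
  define v where "v = neg a"
  have uu: "u \<oplus> u = u" using arg_cong[OF bool_sq[OF bb], of neg] unfolding u_def odot_def by (simp add: neg_neg)
  have uv: "u \<oplus> neg v = one" using ba unfolding u_def v_def odot_def
    by (metis neg_neg neg_one)
  define t where "t = u \<oplus> neg (v \<oplus> u)"
  have "neg (neg u \<oplus> neg v) \<oplus> neg v = neg (neg (neg v) \<oplus> u) \<oplus> u" by (rule luk)
  hence t2: "t = neg v \<oplus> neg (neg u \<oplus> neg v)" unfolding t_def by (simp add: neg_neg comm)
  have "u \<oplus> t = t" unfolding t_def by (simp add: assoc uu)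
  moreover have "u \<oplus> t = one" unfolding t2 by (simp add: assoc uv one_left)
  ultimately have "t = one" by simp
  thus "b \<odot> neg (a \<odot> b) = zero" unfolding t_def u_def v_def odot_def
    by (simp add: neg_neg comm neg_one)
qed

lemma main:
  assumes D: "odot_join_derivation d" and B: "d a \<in> boolean_center"
  shows "d (d a) = d a"
proof -
  have Dx: "\<And>x y. d (x \<odot> y) = join (d x \<odot> y) (x \<odot> d y)" using D unfolding odot_join_derivation_def by blast
  have d0: "d zero = zero" using Dx[of zero zero] by (simp add: odot_zero zero_odot join_zero)
  have le: "\<And>x. d x \<odot> neg x = zero"
  proof -
    fix x
    have "join (d x \<odot> neg x) (x \<odot> d (neg x)) = zero" using Dx[of x "neg x"] by (simp add: odot_neg d0)
    thus "d x \<odot> neg x = zero" by (rule join_zeroD)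
  qed
  define b where "b = d a"
  have bb: "b \<oplus> b = b" using B unfolding b_def boolean_center_def by simp
  have ab: "a \<odot> b = b" using bool_meet[OF bb] le[of a] unfolding b_def by simp
  have "d b = join (b \<odot> b) (a \<odot> d b)" using Dx[of a b] by (simp add: ab b_def[symmetric])
  hence "b \<odot> neg (d b) = zero" using le_join[of b "a \<odot> d b"] bool_sq[OF bb] by simp
  hence "b = d b" using antisym le[of b] by simp
  thus ?thesis unfolding b_def by simp
qed

end

theorem proposition3p8:
  fixes oplus :: "'a \<Rightarrow> 'a \<Rightarrow> 'a" and neg :: "'a \<Rightarrow> 'a" and zero :: 'a
    and d :: "'a \<Rightarrow> 'a" and a :: 'a
  assumes "mv_algebra oplus neg zero"
    and "mv_algebra.odot_join_derivation oplus neg d"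
    and "d a \<in> mv_algebra.boolean_center oplus"
  shows "d (d a) = d a"
  using mv_algebra.main[OF assms] .

end
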